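(* Fix $\mathbf{k}\neq 0$, $t\ge0$, $n\ge1$, and let $g$ be a function of $z$ analytic near the segment $[-i,i]$ of the imaginary axis. Let $\theta_j=\frac{j\pi}{n+1}$, $z_j=i\cos\theta_j$, $\alpha_j=\frac{\sin^2\theta_j}{n+1}$ and $\Delta\theta=\frac{\pi}{2(n+1)}$. Then $$\left|2|\mathbf{k}|\int_{-i}^{i}\sqrt{1+z^2}e^{zt}g(z)\,dz-2\pi i|\mathbf{k}|\sum_{j=1}^n g(z_j)e^{z_jt}\alpha_j\right|\le\frac23|\mathbf{k}|\Delta\theta^3\Big(3\max_{z\in[i\cos\Delta\theta,\,i]}|g(z)|+3\max_{z\in[-i,\,-i\cos\Delta\theta]}|g(z)|+\sum_{j=1}^n\max_{z\in I_j}|E(z)|\Big),$$ where $I_j$ is the segment of the imaginary axis between $i\cos(\theta_j-\Delta\theta)$ and $i\cos(\theta_j+\Delta\theta)$, and $$E(z)=e^{zt}\Big[(z^4+2z^2+1)\big(g''(z)+2t\,g'(z)+t^2g(z)\big)+5(z^3+z)\big(g'(z)+t\,g(z)\big)+(4z^2+2)g(z)\Big].$$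
   Context: The integral is along the segment of the imaginary axis from $-i$ to $i$. In the paper $g$ is given by $|\mathbf{k}|\,g(s/|\mathbf{k}|)=\hat U(x,\mathbf{k},s)$, where $\hat U$ is the Laplace–Fourier transform of a solution of the wave equation, and derivatives are with respect to $z=s/|\mathbf{k}|$. *)

theory Defs
  imports "HOL-Complex_Analysis.Complex_Analysis"
begin

definition wave_E :: "(complex \<Rightarrow> complex) \<Rightarrow> real \<Rightarrow> complex \<Rightarrow> complex" where
  "wave_E g t z = exp (z * of_real t) *
     ((z^4 + 2*z^2 + 1) * (deriv (deriv g) z + 2 * of_real t * deriv g z + (of_real t)^2 * g z)
      + 5 * (z^3 + z) * (deriv g z + of_real t * g z)
      + (4 * z^2 + 2) * g z)"

end

theory Submission
  imports Defs
begin


lemma half_left: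
  fixes f f1 f2 :: "real \<Rightarrow> complex"
  assumes d: "0 \<le> d"
  and D1: "\<And>x. (f has_vector_derivative f1 x) (at x)"
  and D2: "\<And>x. (f1 has_vector_derivative f2 x) (at x)"
  and M: "\<And>x. x \<in> {a..a+d} \<Longrightarrow> norm (f2 x) \<le> M"
  shows "norm ((d^2/2) *\<^sub>R f1 (a+d) - d *\<^sub>R f (a+d) + integral {a..a+d} f) \<le> M * d^3/6"
proof -
  have cf: "continuous_on UNIV f"
    using D1 by (meson continuous_on_vector_derivative has_vector_derivative_at_within)
  have fi: "f integrable_on {a..a+d}"
    by (rule integrable_continuous_interval) (use cf continuous_on_subset in blast)
  have "((\<lambda>x. ((x-a)^2/2) *\<^sub>R f2 x - f x) has_integral
      ((((a+d)-a)^2/2) *\<^sub>R f1 (a+d) - ((a+d)-a) *\<^sub>R f (a+d)) - ((((a-a)^2/2) *\<^sub>R f1 a - (a-a) *\<^sub>R f a))) {a..a+d}"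
  proof (rule fundamental_theorem_of_calculus)
    show "a \<le> a + d" using d by simp
    fix x assume "x \<in> {a..a+d}"
    have "((\<lambda>x. ((x-a)^2/2) *\<^sub>R f1 x - (x-a) *\<^sub>R f x) has_vector_derivative
          (((x-a)^2/2) *\<^sub>R f2 x - f x)) (at x)"
      by (auto intro!: derivative_eq_intros D1 D2 simp: scaleR_conv_of_real field_simps power2_eq_square)
    then show "((\<lambda>x. ((x-a)^2/2) *\<^sub>R f1 x - (x-a) *\<^sub>R f x) has_vector_derivative
          (((x-a)^2/2) *\<^sub>R f2 x - f x)) (at x within {a..a+d})"
      by (simp add: has_vector_derivative_at_within)
  qed
  then have h1: "((\<lambda>x. ((x-a)^2/2) *\<^sub>R f2 x - f x) has_integral
      ((d^2/2) *\<^sub>R f1 (a+d) - d *\<^sub>R f (a+d))) {a..a+d}" by simp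
  have h2: "((\<lambda>x. ((x-a)^2/2) *\<^sub>R f2 x) has_integral
      ((d^2/2) *\<^sub>R f1 (a+d) - d *\<^sub>R f (a+d) + integral {a..a+d} f)) {a..a+d}"
    using has_integral_add[OF h1 integrable_integral[OF fi]] by simp
  have h3: "((\<lambda>x. M * (x-a)^2/2) has_integral (M * ((a+d)-a)^3/6 - M*(a-a)^3/6)) {a..a+d}"
  proof (rule fundamental_theorem_of_calculus)
    show "a \<le> a + d" using d by simp
    fix x assume "x \<in> {a..a+d}"
    show "((\<lambda>x. M * (x-a)^3/6) has_vector_derivative (M * (x-a)^2/2)) (at x within {a..a+d})"
      unfolding has_real_derivative_iff_has_vector_derivative[symmetric]
      by (auto intro!: derivative_eq_intros simp: power2_eq_square)
  qed
  have "norm (integral {a..a+d} (\<lambda>x. ((x-a)^2/2) *\<^sub>R f2 x)) \<le> integral {a..a+d} (\<lambda>x. M * (x-a)^2/2)"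
  proof (rule integral_norm_bound_integral)
    show "(\<lambda>x. ((x-a)^2/2) *\<^sub>R f2 x) integrable_on {a..a+d}" using h2 by blast
    show "(\<lambda>x. M * (x-a)^2/2) integrable_on {a..a+d}" using h3 by blast
    fix x assume x: "x \<in> {a..a+d}"
    have "norm (((x-a)^2/2) *\<^sub>R f2 x) = ((x-a)^2/2) * norm (f2 x)" by simp
    also have "\<dots> \<le> ((x-a)^2/2) * M" using M[OF x] by (intro mult_left_mono) auto
    finally show "norm (((x-a)^2/2) *\<^sub>R f2 x) \<le> M * (x-a)^2/2" by (simp add: mult.commute)
  qed
  moreover have "integral {a..a+d} (\<lambda>x. M * (x-a)^2/2) = M * d^3/6" using integral_unique[OF h3] by simp
  ultimately show ?thesis unfolding integral_unique[OF h2] by linarith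
qed

lemma half_right:
  fixes f f1 f2 :: "real \<Rightarrow> complex"
  assumes d: "0 \<le> d"
  and D1: "\<And>x. (f has_vector_derivative f1 x) (at x)"
  and D2: "\<And>x. (f1 has_vector_derivative f2 x) (at x)"
  and M: "\<And>x. x \<in> {b-d..b} \<Longrightarrow> norm (f2 x) \<le> M"
  shows "norm (- (d^2/2) *\<^sub>R f1 (b-d) - d *\<^sub>R f (b-d) + integral {b-d..b} f) \<le> M * d^3/6"
proof -
  have cf: "continuous_on UNIV f"
    using D1 by (meson continuous_on_vector_derivative has_vector_derivative_at_within)
  have fi: "f integrable_on {b-d..b}"
    by (rule integrable_continuous_interval) (use cf continuous_on_subset in blast)
  have "((\<lambda>x. ((b-x)^2/2) *\<^sub>R f2 x - f x) has_integral
      ((((b-b)^2/2) *\<^sub>R f1 b + (b-b) *\<^sub>R f b) - ((((b-(b-d))^2/2) *\<^sub>R f1 (b-d) + (b-(b-d)) *\<^sub>R f (b-d))))) {b-d..b}"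
  proof (rule fundamental_theorem_of_calculus)
    show "b-d \<le> b" using d by simp
    fix x assume "x \<in> {b-d..b}"
    have "((\<lambda>x. ((b-x)^2/2) *\<^sub>R f1 x + (b-x) *\<^sub>R f x) has_vector_derivative
          (((b-x)^2/2) *\<^sub>R f2 x - f x)) (at x)"
      by (auto intro!: derivative_eq_intros D1 D2 simp: scaleR_conv_of_real field_simps power2_eq_square)
    then show "((\<lambda>x. ((b-x)^2/2) *\<^sub>R f1 x + (b-x) *\<^sub>R f x) has_vector_derivative
          (((b-x)^2/2) *\<^sub>R f2 x - f x)) (at x within {b-d..b})"
      by (simp add: has_vector_derivative_at_within)
  qed
  then have h1: "((\<lambda>x. ((b-x)^2/2) *\<^sub>R f2 x - f x) has_integral
      (- (d^2/2) *\<^sub>R f1 (b-d) - d *\<^sub>R f (b-d))) {b-d..b}" by simp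
  have h2: "((\<lambda>x. ((b-x)^2/2) *\<^sub>R f2 x) has_integral
      (- (d^2/2) *\<^sub>R f1 (b-d) - d *\<^sub>R f (b-d) + integral {b-d..b} f)) {b-d..b}"
    using has_integral_add[OF h1 integrable_integral[OF fi]] by simp
  have h3: "((\<lambda>x. M * (b-x)^2/2) has_integral (- M * (b-b)^3/6 - (- M*(b-(b-d))^3/6))) {b-d..b}"
  proof (rule fundamental_theorem_of_calculus)
    show "b-d \<le> b" using d by simp
    fix x assume "x \<in> {b-d..b}"
    show "((\<lambda>x. - M * (b-x)^3/6) has_vector_derivative (M * (b-x)^2/2)) (at x within {b-d..b})"
      unfolding has_real_derivative_iff_has_vector_derivative[symmetric]
      by (auto intro!: derivative_eq_intros simp: power2_eq_square)
  qed
  have "norm (integral {b-d..b} (\<lambda>x. ((b-x)^2/2) *\<^sub>R f2 x)) \<le> integral {b-d..b} (\<lambda>x. M * (b-x)^2/2)"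
  proof (rule integral_norm_bound_integral)
    show "(\<lambda>x. ((b-x)^2/2) *\<^sub>R f2 x) integrable_on {b-d..b}" using h2 by blast
    show "(\<lambda>x. M * (b-x)^2/2) integrable_on {b-d..b}" using h3 by blast
    fix x assume x: "x \<in> {b-d..b}"
    have "norm (((b-x)^2/2) *\<^sub>R f2 x) = ((b-x)^2/2) * norm (f2 x)" by simp
    also have "\<dots> \<le> ((b-x)^2/2) * M" using M[OF x] by (intro mult_left_mono) auto
    finally show "norm (((b-x)^2/2) *\<^sub>R f2 x) \<le> M * (b-x)^2/2" by (simp add: mult.commute)
  qed
  moreover have "integral {b-d..b} (\<lambda>x. M * (b-x)^2/2) = M * d^3/6" using integral_unique[OF h3] by simp
  ultimately show ?thesis unfolding integral_unique[OF h2] by linarith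
qed

lemma midpoint_err:
  fixes f f1 f2 :: "real \<Rightarrow> complex"
  assumes d: "0 \<le> d"
  and D1: "\<And>x. (f has_vector_derivative f1 x) (at x)"
  and D2: "\<And>x. (f1 has_vector_derivative f2 x) (at x)"
  and M: "\<And>x. x \<in> {c-d..c+d} \<Longrightarrow> norm (f2 x) \<le> M"
  shows "norm (integral {c-d..c+d} f - (2*d) *\<^sub>R f c) \<le> M * d^3/3"
proof -
  have L: "norm ((d^2/2) *\<^sub>R f1 c - d *\<^sub>R f c + integral {c-d..c} f) \<le> M * d^3/6"
    using half_left[OF d D1 D2, of "c-d" M] M by auto
  have R: "norm (- (d^2/2) *\<^sub>R f1 c - d *\<^sub>R f c + integral {c..c+d} f) \<le> M * d^3/6"
    using half_right[OF d D1 D2, of "c+d" M] M by auto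
  have cf: "continuous_on UNIV f"
    using D1 by (meson continuous_on_vector_derivative has_vector_derivative_at_within)
  have fi: "f integrable_on {c-d..c+d}"
    by (rule integrable_continuous_interval) (use cf continuous_on_subset in blast)
  have "integral {c-d..c+d} f - (2*d) *\<^sub>R f c =
     ((d^2/2) *\<^sub>R f1 c - d *\<^sub>R f c + integral {c-d..c} f) + (- (d^2/2) *\<^sub>R f1 c - d *\<^sub>R f c + integral {c..c+d} f)"
    using Henstock_Kurzweil_Integration.integral_combine[OF _ _ fi, of c] d by (simp add: algebra_simps scaleR_add_left[symmetric])
  then show ?thesis using norm_triangle_le[OF add_mono[OF L R]] by simp
qed



lemma comp_icos_deriv:
  assumes "(H has_field_derivative H1 (\<i> * of_real (cos x))) (at (\<i> * of_real (cos x)))"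
  shows "((\<lambda>\<theta>. H (\<i> * of_real (cos \<theta>))) has_vector_derivative
          (- \<i> * of_real (sin x) * H1 (\<i> * of_real (cos x)))) (at x)"
proof -
  have i: "((\<lambda>\<theta>. \<i> * of_real (cos \<theta>)) has_vector_derivative (\<i> * of_real (- sin x))) (at x)"
    by (auto intro!: derivative_eq_intros)
  from field_vector_diff_chain_at[OF i assms] show ?thesis by (simp add: o_def)
qed

lemma sq_deriv:
  assumes "\<And>x. (H has_field_derivative H1 (\<i> * of_real (cos x))) (at (\<i> * of_real (cos x)))"
  shows "((\<lambda>\<theta>. of_real ((sin \<theta>)^2) * H (\<i> * of_real (cos \<theta>))) has_vector_derivative
          (of_real (2 * sin x * cos x) * H (\<i> * of_real (cos x))
           - \<i> * of_real ((sin x)^3) * H1 (\<i> * of_real (cos x)))) (at x)"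
proof -
  have a: "((\<lambda>\<theta>. of_real ((sin \<theta>)^2) :: complex) has_vector_derivative of_real (2 * sin x * cos x)) (at x)"
    by (rule has_vector_derivative_of_real) (auto intro!: derivative_eq_intros)
  have "((\<lambda>\<theta>. of_real ((sin \<theta>)^2) * H (\<i> * of_real (cos \<theta>))) has_vector_derivative
     (of_real ((sin x)^2) * (- \<i> * of_real (sin x) * H1 (\<i> * of_real (cos x))) + of_real (2 * sin x * cos x) * H (\<i> * of_real (cos x)))) (at x)"
    by (rule has_vector_derivative_mult[OF a], rule comp_icos_deriv, rule assms)
  moreover have "of_real ((sin x)^2) * (- \<i> * of_real (sin x) * H1 (\<i> * of_real (cos x))) + of_real (2 * sin x * cos x) * H (\<i> * of_real (cos x))
     = of_real (2 * sin x * cos x) * H (\<i> * of_real (cos x))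
           - \<i> * of_real ((sin x)^3) * H1 (\<i> * of_real (cos x))"
    by (simp add: algebra_simps power3_eq_cube power2_eq_square)
  ultimately show ?thesis by metis
qed

lemma alg:
  fixes S C h0 h1 h2 :: complex
  assumes "S^2 = 1 - C^2"
  shows "(2*S*C*(-\<i>*S*h1) + (2*C*C - 2*S*S)*h0) - (\<i>*S^3*(-\<i>*S*h2) + \<i>*(3*S^2*C)*h1)
     = -((1+(\<i>*C)^2)^2*h2 + 5*((\<i>*C)^3 + \<i>*C)*h1 + (4*(\<i>*C)^2+2)*h0)"
proof -
  have i: "\<i>^2 = (-1::complex)" by simp
  show ?thesis using assms i by algebra
qed

lemma sq_deriv2:
  assumes "\<And>x. (H has_field_derivative H1 (\<i> * of_real (cos x))) (at (\<i> * of_real (cos x)))"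
   and "\<And>x. (H1 has_field_derivative H2 (\<i> * of_real (cos x))) (at (\<i> * of_real (cos x)))"
  shows "((\<lambda>x. of_real (2 * sin x * cos x) * H (\<i> * of_real (cos x))
           - \<i> * of_real ((sin x)^3) * H1 (\<i> * of_real (cos x))) has_vector_derivative
          (- ((1 + (\<i> * of_real (cos x))^2)^2 * H2 (\<i> * of_real (cos x))
              + 5 * ((\<i> * of_real (cos x))^3 + \<i> * of_real (cos x)) * H1 (\<i> * of_real (cos x))
              + (4 * (\<i> * of_real (cos x))^2 + 2) * H (\<i> * of_real (cos x))))) (at x)"
proof -
  have a: "((\<lambda>\<theta>. of_real (2 * sin \<theta> * cos \<theta>) :: complex) has_vector_derivative
       of_real (2 * cos x * cos x - 2 * sin x * sin x)) (at x)"
    by (rule has_vector_derivative_of_real) (auto intro!: derivative_eq_intros simp: algebra_simps)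
  have b0: "((\<lambda>\<theta>. of_real ((sin \<theta>)^3) :: complex) has_vector_derivative
       of_real (3 * (sin x)^2 * cos x)) (at x)"
    by (rule has_vector_derivative_of_real) (auto intro!: derivative_eq_intros)
  have b: "((\<lambda>\<theta>. \<i> * of_real ((sin \<theta>)^3) :: complex) has_vector_derivative
       \<i> * of_real (3 * (sin x)^2 * cos x)) (at x)"
    using has_vector_derivative_mult[OF has_vector_derivative_const[of \<i>] b0] by simp
  have "((\<lambda>x. of_real (2 * sin x * cos x) * H (\<i> * of_real (cos x))
           - \<i> * of_real ((sin x)^3) * H1 (\<i> * of_real (cos x))) has_vector_derivative
       ((of_real (2 * sin x * cos x) * (- \<i> * of_real (sin x) * H1 (\<i> * of_real (cos x)))
         + of_real (2 * cos x * cos x - 2 * sin x * sin x) * H (\<i> * of_real (cos x)))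
      - (\<i> * of_real ((sin x)^3) * (- \<i> * of_real (sin x) * H2 (\<i> * of_real (cos x)))
         + \<i> * of_real (3 * (sin x)^2 * cos x) * H1 (\<i> * of_real (cos x))))) (at x)"
    by (intro has_vector_derivative_diff has_vector_derivative_mult a b comp_icos_deriv assms)
  moreover
  have s: "(of_real (sin x) :: complex)^2 = 1 - (of_real (cos x))^2"
    by (metis of_real_1 of_real_diff of_real_power sin_squared_eq)
  have "(of_real (2 * sin x * cos x) * (- \<i> * of_real (sin x) * H1 (\<i> * of_real (cos x)))
         + of_real (2 * cos x * cos x - 2 * sin x * sin x) * H (\<i> * of_real (cos x)))
      - (\<i> * of_real ((sin x)^3) * (- \<i> * of_real (sin x) * H2 (\<i> * of_real (cos x)))
         + \<i> * of_real (3 * (sin x)^2 * cos x) * H1 (\<i> * of_real (cos x)))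
     = - ((1 + (\<i> * of_real (cos x))^2)^2 * H2 (\<i> * of_real (cos x))
              + 5 * ((\<i> * of_real (cos x))^3 + \<i> * of_real (cos x)) * H1 (\<i> * of_real (cos x))
              + (4 * (\<i> * of_real (cos x))^2 + 2) * H (\<i> * of_real (cos x)))"
    using alg[of "of_real (sin x)" "of_real (cos x)" "H1 (\<i> * of_real (cos x))" "H (\<i> * of_real (cos x))" "H2 (\<i> * of_real (cos x))"] s
    by (simp add: of_real_mult of_real_diff of_real_power)
  ultimately show ?thesis by simp
qed



lemma seg_imag:
  fixes p q y :: real
  assumes "min p q \<le> y" "y \<le> max p q"
  shows "\<i> * of_real y \<in> closed_segment (\<i> * of_real p) (\<i> * of_real q)"
proof -
  have lin: "linear (\<lambda>x::real. \<i> * of_real x)"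
    by (rule linearI) (simp_all add: algebra_simps scaleR_conv_of_real)
  have "y \<in> closed_segment p q" using assms by (auto simp: closed_segment_eq_real_ivl)
  then show ?thesis unfolding closed_segment_linear_image[OF lin] by blast
qed

lemma seg_icos: "\<i> * of_real (cos x) \<in> closed_segment (-\<i>) \<i>"
  using seg_imag[of "-1" 1 "cos x"] by simp

lemma contour_to_theta:
  fixes G :: "complex \<Rightarrow> complex"
  assumes cont: "continuous_on (closed_segment (-\<i>) \<i>) G"
  shows "contour_integral (linepath (-\<i>) \<i>) (\<lambda>z. csqrt (1 + z^2) * G z)
       = \<i> * integral {0..pi} (\<lambda>\<theta>. of_real ((sin \<theta>)^2) * G (\<i> * of_real (cos \<theta>)))"
proof -
  define f where "f = (\<lambda>z. csqrt (1 + z^2) * G z)"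
  define Fp where "Fp = (\<lambda>u::real. of_real (sqrt (1 - (1 - 2*u)^2)) * G (\<i> * of_real (1 - 2*u)) * (-2*\<i>))"
  define \<phi> where "\<phi> = (\<lambda>\<theta>. of_real ((sin \<theta>)^2) * G (\<i> * of_real (cos \<theta>)))"
  have seg: "\<i> * of_real y \<in> closed_segment (-\<i>) \<i>" if "-1 \<le> y" "y \<le> 1" for y
    using seg_imag[of "-1" 1 y] that by simp
  have lp: "linepath \<i> (-\<i>) u = \<i> * of_real (1 - 2*u)" for u
    by (simp add: linepath_def scaleR_conv_of_real algebra_simps)
  have cFp: "continuous_on {0..1} Fp"
    unfolding Fp_def
  proof (intro continuous_intros)
    have "continuous_on {0..1} (\<lambda>u::real. \<i> * of_real (1 - 2*u))" by (intro continuous_intros)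
    moreover have "(\<lambda>u::real. \<i> * of_real (1 - 2*u)) ` {0..1} \<subseteq> closed_segment (-\<i>) \<i>"
      by (rule image_subsetI, rule seg) auto
    ultimately show "continuous_on {0..1} (\<lambda>u::real. G (\<i> * of_real (1 - 2*u)))"
      using continuous_on_compose2[OF cont] by blast
  qed
  have FF: "f (linepath \<i> (-\<i>) u) * (-\<i> - \<i>) = Fp u" if "u \<in> {0..1}" for u
  proof -
    have "1 + (\<i> * of_real (1 - 2*u))^2 = (of_real (1 - (1-2*u)^2) :: complex)"
      by (simp add: power_mult_distrib)
    moreover have "1 - (1-2*u)^2 = 4*u*(1-u)" by (simp add: power2_eq_square algebra_simps)
    then have "1 - (1-2*u)^2 \<ge> 0" using that by simp
    ultimately have "csqrt (1 + (\<i> * of_real (1 - 2*u))^2) = of_real (sqrt (1 - (1-2*u)^2))"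
      using of_real_sqrt[of "1 - (1-2*u)^2"] by metis
    then show ?thesis by (simp add: f_def Fp_def lp)
  qed
  have J: "(Fp has_integral integral {0..1} Fp) {0..1}"
    using cFp integrable_continuous_interval by blast
  have "((\<lambda>u. f (linepath \<i> (-\<i>) u) * (-\<i> - \<i>)) has_integral integral {0..1} Fp) {0..1}"
    by (rule has_integral_eq[OF _ J]) (metis FF)
  then have "(f has_contour_integral integral {0..1} Fp) (linepath \<i> (-\<i>))"
    by (simp add: has_contour_integral_linepath)
  note C0 = this
  have C: "(f has_contour_integral - integral {0..1} Fp) (linepath (-\<i>) \<i>)"
    using has_contour_integral_reversepath[OF valid_path_linepath C0] by simp
  have sub: "((\<lambda>\<theta>. (sin \<theta>/2) *\<^sub>R Fp ((1 - cos \<theta>)/2)) has_integral integral {(1 - cos 0)/2..(1 - cos pi)/2} Fp) {0..pi}"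
  proof (rule has_integral_substitution[where c=0 and d=1])
    show "0 \<le> pi" by simp
    show "(1 - cos 0)/2 \<le> (1 - cos pi)/2" by simp
    show "(\<lambda>\<theta>. (1 - cos \<theta>)/2) ` {0..pi} \<subseteq> {0..1}" by auto
    show "continuous_on {0..1} Fp" by (rule cFp)
    fix x assume "x \<in> {0..pi}"
    show "((\<lambda>\<theta>. (1 - cos \<theta>)/2) has_real_derivative sin x / 2) (at x within {0..pi})"
      by (auto intro!: derivative_eq_intros)
  qed
  have eq: "(sin \<theta>/2) *\<^sub>R Fp ((1 - cos \<theta>)/2) = -\<i> * \<phi> \<theta>" if "\<theta> \<in> {0..pi}" for \<theta>
  proof -
    have s0: "sin \<theta> \<ge> 0" using that sin_ge_zero by auto
    have c: "1 - 2*((1 - cos \<theta>)/2) = cos \<theta>" by (simp add: field_simps)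
    have "1 - (cos \<theta>)^2 = (sin \<theta>)^2" by (simp add: sin_squared_eq)
    then have q0: "sqrt (1 - (cos \<theta>)^2) = sin \<theta>" using s0 by simp
    then have q: "sqrt (1 - (1 - 2*((1 - cos \<theta>)/2))^2) = sin \<theta>" unfolding c .
    have "Fp ((1 - cos \<theta>)/2) = of_real (sin \<theta>) * G (\<i> * of_real (cos \<theta>)) * (-2*\<i>)"
      unfolding Fp_def q c using q0 by simp
    then show ?thesis
      by (simp add: \<phi>_def scaleR_conv_of_real power2_eq_square)
  qed
  have "((\<lambda>\<theta>. -\<i> * \<phi> \<theta>) has_integral integral {0..1} Fp) {0..pi}"
    using has_integral_eq[OF eq sub] by simp
  from has_integral_mult_right[OF this, of \<i>]
  have "(\<phi> has_integral \<i> * integral {0..1} Fp) {0..pi}" by simp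
  then have "integral {0..pi} \<phi> = \<i> * integral {0..1} Fp" by (rule integral_unique)
  then have "\<i> * integral {0..pi} \<phi> = - integral {0..1} Fp" by simp
  with contour_integral_unique[OF C] show ?thesis by (simp add: f_def \<phi>_def)
qed



lemma edge_left:
  fixes f :: "real \<Rightarrow> complex"
  assumes c: "continuous_on UNIV f" and d: "0 \<le> d"
    and b: "\<And>x. x \<in> {0..d} \<Longrightarrow> norm (f x) \<le> M * x^2"
  shows "norm (integral {0..d} f) \<le> M * d^3/3"
proof -
  have h: "((\<lambda>x. M * x^2) has_integral (M * d^3/3 - M * 0^3/3)) {0..d}"
  proof (rule fundamental_theorem_of_calculus)
    show "0 \<le> d" by (rule d)
    fix x assume "x \<in> {0..d}"
    show "((\<lambda>x. M * x^3/3) has_vector_derivative (M * x^2)) (at x within {0..d})"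
      unfolding has_real_derivative_iff_has_vector_derivative[symmetric]
      by (auto intro!: derivative_eq_intros simp: power2_eq_square)
  qed
  have "norm (integral {0..d} f) \<le> integral {0..d} (\<lambda>x. M * x^2)"
  proof (rule integral_norm_bound_integral)
    show "f integrable_on {0..d}"
      by (rule integrable_continuous_interval) (use c continuous_on_subset in blast)
    show "(\<lambda>x. M * x^2) integrable_on {0..d}" using h by blast
  qed (rule b)
  moreover have "integral {0..d} (\<lambda>x. M * x^2) = M * d^3/3" using integral_unique[OF h] by simp
  ultimately show ?thesis by linarith
qed

lemma edge_right:
  fixes f :: "real \<Rightarrow> complex"
  assumes c: "continuous_on UNIV f" and d: "0 \<le> d"
    and b: "\<And>x. x \<in> {p-d..p} \<Longrightarrow> norm (f x) \<le> M * (p-x)^2"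
  shows "norm (integral {p-d..p} f) \<le> M * d^3/3"
proof -
  have h: "((\<lambda>x. M * (p-x)^2) has_integral (- M * (p-p)^3/3 - (- M * (p-(p-d))^3/3))) {p-d..p}"
  proof (rule fundamental_theorem_of_calculus)
    show "p-d \<le> p" using d by simp
    fix x assume "x \<in> {p-d..p}"
    show "((\<lambda>x. - M * (p-x)^3/3) has_vector_derivative (M * (p-x)^2)) (at x within {p-d..p})"
      unfolding has_real_derivative_iff_has_vector_derivative[symmetric]
      by (auto intro!: derivative_eq_intros simp: power2_eq_square)
  qed
  have "norm (integral {p-d..p} f) \<le> integral {p-d..p} (\<lambda>x. M * (p-x)^2)"
  proof (rule integral_norm_bound_integral)
    show "f integrable_on {p-d..p}"
      by (rule integrable_continuous_interval) (use c continuous_on_subset in blast)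
    show "(\<lambda>x. M * (p-x)^2) integrable_on {p-d..p}" using h by blast
  qed (rule b)
  moreover have "integral {p-d..p} (\<lambda>x. M * (p-x)^2) = M * d^3/3" using integral_unique[OF h] by simp
  ultimately show ?thesis by linarith
qed

lemma decomp:
  fixes f :: "real \<Rightarrow> complex"
  assumes c: "continuous_on UNIV f" and d: "0 \<le> d"
  shows "integral {0..(2*real m+1)*d} f = integral {0..d} f + (\<Sum>j=1..m. integral {2*real j*d - d..2*real j*d + d} f)"
proof (induction m)
  case 0
  then show ?case by simp
next
  case (Suc m)
  have fi: "f integrable_on {0..(2*real (Suc m)+1)*d}"
    by (rule integrable_continuous_interval) (use c continuous_on_subset in blast)
  have "integral {0..(2*real (Suc m)+1)*d} f = integral {0..(2*real m+1)*d} f + integral {(2*real m+1)*d..(2*real (Suc m)+1)*d} f"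
    using Henstock_Kurzweil_Integration.integral_combine[OF _ _ fi, of "(2*real m+1)*d"] d
    by (simp add: mult_left_mono algebra_simps)
  moreover have e1: "(2*real m+1)*d = 2*real (Suc m)*d - d" by (simp add: algebra_simps)
  have e2: "(2*real (Suc m)+1)*d = 2*real (Suc m)*d + d" by (simp add: algebra_simps)
  have "integral {(2*real m+1)*d..(2*real (Suc m)+1)*d} f = integral {2*real (Suc m)*d - d..2*real (Suc m)*d + d} f"
    unfolding e1 e2 by (rule refl)
  ultimately show ?case using Suc.IH by simp
qed

lemma core_bound:
  fixes \<phi> \<phi>1 \<phi>2 :: "real \<Rightarrow> complex" and n :: nat and M1 M2 :: real and Mc :: "nat \<Rightarrow> real"
  assumes D1: "\<And>x. (\<phi> has_vector_derivative \<phi>1 x) (at x)"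
  and D2: "\<And>x. (\<phi>1 has_vector_derivative \<phi>2 x) (at x)"
  and eL: "\<And>x. x \<in> {0..pi/(2*real(n+1))} \<Longrightarrow> norm (\<phi> x) \<le> M1 * x^2"
  and eR: "\<And>x. x \<in> {pi - pi/(2*real(n+1))..pi} \<Longrightarrow> norm (\<phi> x) \<le> M2 * (pi - x)^2"
  and cell: "\<And>j x. j \<in> {1..n} \<Longrightarrow> x \<in> {real j*pi/real(n+1) - pi/(2*real(n+1)) .. real j*pi/real(n+1) + pi/(2*real(n+1))} \<Longrightarrow> norm (\<phi>2 x) \<le> Mc j"
  shows "norm (integral {0..pi} \<phi> - (\<Sum>j=1..n. (2*(pi/(2*real(n+1)))) *\<^sub>R \<phi> (real j*pi/real(n+1))))
          \<le> (pi/(2*real(n+1)))^3/3 * (M1 + M2 + (\<Sum>j=1..n. Mc j))"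
proof -
  define d where "d = pi/(2*real(n+1))"
  have d0: "0 \<le> d" by (simp add: d_def)
  have cf: "continuous_on UNIV \<phi>"
    using D1 by (meson continuous_on_vector_derivative has_vector_derivative_at_within)
  have th: "real j*pi/real(n+1) = 2*real j*d" for j by (simp add: d_def field_simps)
  have pi: "pi = (2*real n+1)*d + d"
  proof -
    have "(2*real n+1)*d + d = (2*(real n + 1)) * d" by (simp add: algebra_simps)
    also have "\<dots> = pi" unfolding d_def by (simp add: add.commute)
    finally show ?thesis by simp
  qed
  have fi: "\<phi> integrable_on {0..pi}"
    by (rule integrable_continuous_interval) (use cf continuous_on_subset in blast)
  have split: "integral {0..pi} \<phi> = integral {0..(2*real n+1)*d} \<phi> + integral {pi - d..pi} \<phi>"
  proof -
    have "integral {0..(2*real n+1)*d} \<phi> + integral {(2*real n+1)*d..pi} \<phi> = integral {0..pi} \<phi>"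
      by (rule Henstock_Kurzweil_Integration.integral_combine[OF _ _ fi]) (use d0 pi in auto)
    moreover have "(2*real n+1)*d = pi - d" using pi by simp
    ultimately show ?thesis by simp
  qed
  define C where "C j = integral {2*real j*d - d..2*real j*d + d} \<phi>" for j
  have eq: "integral {0..pi} \<phi> - (\<Sum>j=1..n. (2*d) *\<^sub>R \<phi> (2*real j*d))
      = integral {0..d} \<phi> + integral {pi - d..pi} \<phi> + (\<Sum>j=1..n. C j - (2*d) *\<^sub>R \<phi> (2*real j*d))"
    unfolding split decomp[OF cf d0] C_def sum_subtractf by (simp add: algebra_simps)
  have bA: "norm (integral {0..d} \<phi>) \<le> M1 * d^3/3"
    by (rule edge_left[OF cf d0]) (use eL d_def in auto)
  have bB: "norm (integral {pi - d..pi} \<phi>) \<le> M2 * d^3/3"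
    by (rule edge_right[OF cf d0]) (use eR d_def in auto)
  have bC: "norm (C j - (2*d) *\<^sub>R \<phi> (2*real j*d)) \<le> Mc j * d^3/3" if j: "j \<in> {1..n}" for j
    unfolding C_def
    by (rule midpoint_err[OF d0 D1 D2]) (use cell[OF j] th d_def in auto)
  have "norm (integral {0..pi} \<phi> - (\<Sum>j=1..n. (2*d) *\<^sub>R \<phi> (2*real j*d)))
     \<le> norm (integral {0..d} \<phi>) + norm (integral {pi - d..pi} \<phi>) + (\<Sum>j=1..n. norm (C j - (2*d) *\<^sub>R \<phi> (2*real j*d)))"
    unfolding eq by (rule order_trans[OF norm_triangle_ineq] add_mono norm_triangle_ineq norm_sum order_refl)+
  also have "\<dots> \<le> M1 * d^3/3 + M2 * d^3/3 + (\<Sum>j=1..n. Mc j * d^3/3)"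
    by (intro add_mono bA bB sum_mono bC)
  also have "\<dots> = d^3/3 * (M1 + M2 + (\<Sum>j=1..n. Mc j))"
    by (simp add: sum_distrib_left sum_divide_distrib algebra_simps)
  finally show ?thesis unfolding th d_def .
qed



lemma sup_bound:
  fixes h :: "complex \<Rightarrow> complex"
  assumes "continuous_on T h" "compact T" "z \<in> T"
  shows "norm (h z) \<le> Sup ((\<lambda>z. norm (h z)) ` T)"
proof (rule cSup_upper)
  show "norm (h z) \<in> (\<lambda>z. norm (h z)) ` T" using assms(3) by blast
  have "compact ((\<lambda>z. norm (h z)) ` T)"
    by (rule compact_continuous_image) (use assms(1,2) continuous_on_norm in auto)
  then show "bdd_above ((\<lambda>z. norm (h z)) ` T)"
    by (simp add: bounded_imp_bdd_above compact_imp_bounded)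
qed

lemma wave_E_alt:
  "wave_E g t z = (1 + z^2)^2 * (exp (z * of_real t) * (deriv (deriv g) z + 2 * of_real t * deriv g z + (of_real t)^2 * g z))
     + 5 * (z^3 + z) * (exp (z * of_real t) * (deriv g z + of_real t * g z))
     + (4 * z^2 + 2) * (exp (z * of_real t) * g z)"
  unfolding wave_E_def by algebra

theorem proposition2:
  fixes k :: "'a::real_normed_vector" and t :: real and n :: nat
    and g :: "complex \<Rightarrow> complex"
  assumes "k \<noteq> 0" and "t \<ge> 0" and "n \<ge> 1"
    and "g analytic_on closed_segment (-\<i>) \<i>"
  shows "let \<theta> = (\<lambda>j::nat. real j * pi / real (n + 1));
             zz = (\<lambda>j. \<i> * of_real (cos (\<theta> j)));
             \<alpha> = (\<lambda>j. (sin (\<theta> j))^2 / real (n + 1));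
             d = pi / (2 * real (n + 1));
             K = norm k
         in norm (2 * of_real K * contour_integral (linepath (-\<i>) \<i>)
                     (\<lambda>z. csqrt (1 + z^2) * exp (z * of_real t) * g z)
                  - 2 * of_real pi * \<i> * of_real K *
                     (\<Sum>j=1..n. g (zz j) * exp (zz j * of_real t) * of_real (\<alpha> j)))
            \<le> 2/3 * K * d^3 *
               (3 * Sup ((\<lambda>z. norm (g z)) ` closed_segment (\<i> * of_real (cos d)) \<i>)
                + 3 * Sup ((\<lambda>z. norm (g z)) ` closed_segment (-\<i>) (-\<i> * of_real (cos d)))
                + (\<Sum>j=1..n. Sup ((\<lambda>z. norm (wave_E g t z)) `
                     closed_segment (\<i> * of_real (cos (\<theta> j - d))) (\<i> * of_real (cos (\<theta> j + d))))))"
proof -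
  define \<theta> where "\<theta> = (\<lambda>j::nat. real j * pi / real (n + 1))"
  define zz where "zz = (\<lambda>j. \<i> * of_real (cos (\<theta> j)))"
  define \<alpha> where "\<alpha> = (\<lambda>j. (sin (\<theta> j))^2 / real (n + 1))"
  define d where "d = pi / (2 * real (n + 1))"
  define K where "K = norm k"
  define S where "S = closed_segment (-\<i>) \<i>"
  obtain U where U: "open U" "S \<subseteq> U" "g holomorphic_on U"
    using assms(4) analytic_on_holomorphic unfolding S_def by blast
  have h1: "deriv g holomorphic_on U" by (rule holomorphic_deriv[OF U(3) U(1)])
  have h2: "deriv (deriv g) holomorphic_on U" by (rule holomorphic_deriv[OF h1 U(1)])
  define G where "G = (\<lambda>z. exp (z * of_real t) * g z)"
  define G1 where "G1 = (\<lambda>z. exp (z * of_real t) * (deriv g z + of_real t * g z))"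
  define G2 where "G2 = (\<lambda>z. exp (z * of_real t) * (deriv (deriv g) z + 2 * of_real t * deriv g z + (of_real t)^2 * g z))"
  have dG: "(G has_field_derivative G1 z) (at z)" if "z \<in> U" for z
  proof -
    have dg: "(g has_field_derivative deriv g z) (at z)" by (rule holomorphic_derivI[OF U(3) U(1) that])
    show ?thesis unfolding G_def G1_def
      by (auto intro!: derivative_eq_intros dg simp: algebra_simps)
  qed
  have dG1: "(G1 has_field_derivative G2 z) (at z)" if "z \<in> U" for z
  proof -
    have dg: "(g has_field_derivative deriv g z) (at z)" by (rule holomorphic_derivI[OF U(3) U(1) that])
    have dg1: "(deriv g has_field_derivative deriv (deriv g) z) (at z)" by (rule holomorphic_derivI[OF h1 U(1) that])
    show ?thesis unfolding G1_def G2_def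
      by (auto intro!: derivative_eq_intros dg dg1 simp: algebra_simps power2_eq_square)
  qed
  have inS: "\<i> * of_real (cos x) \<in> S" for x using seg_icos unfolding S_def .
  have inU: "\<i> * of_real (cos x) \<in> U" for x using inS U(2) by blast
  define \<phi> where "\<phi> = (\<lambda>\<theta>. of_real ((sin \<theta>)^2) * G (\<i> * of_real (cos \<theta>)))"
  define \<phi>1 where "\<phi>1 = (\<lambda>x. of_real (2 * sin x * cos x) * G (\<i> * of_real (cos x))
           - \<i> * of_real ((sin x)^3) * G1 (\<i> * of_real (cos x)))"
  define \<phi>2 where "\<phi>2 = (\<lambda>x. - wave_E g t (\<i> * of_real (cos x)))"
  have D1: "(\<phi> has_vector_derivative \<phi>1 x) (at x)" for x
    unfolding \<phi>_def \<phi>1_def by (rule sq_deriv) (rule dG[OF inU])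
  have D2: "(\<phi>1 has_vector_derivative \<phi>2 x) (at x)" for x
  proof -
    have "(\<phi>1 has_vector_derivative
          (- ((1 + (\<i> * of_real (cos x))^2)^2 * G2 (\<i> * of_real (cos x))
              + 5 * ((\<i> * of_real (cos x))^3 + \<i> * of_real (cos x)) * G1 (\<i> * of_real (cos x))
              + (4 * (\<i> * of_real (cos x))^2 + 2) * G (\<i> * of_real (cos x))))) (at x)"
      unfolding \<phi>1_def by (rule sq_deriv2) (rule dG[OF inU], rule dG1[OF inU])
    moreover have "\<phi>2 x = - ((1 + (\<i> * of_real (cos x))^2)^2 * G2 (\<i> * of_real (cos x))
              + 5 * ((\<i> * of_real (cos x))^3 + \<i> * of_real (cos x)) * G1 (\<i> * of_real (cos x))
              + (4 * (\<i> * of_real (cos x))^2 + 2) * G (\<i> * of_real (cos x)))"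
      unfolding \<phi>2_def wave_E_alt G_def G1_def G2_def by simp
    ultimately show ?thesis by simp
  qed
  have cg: "continuous_on U g" using U(3) holomorphic_on_imp_continuous_on by blast
  have cE: "continuous_on U (wave_E g t)"
    unfolding wave_E_def
    using h1 h2 cg holomorphic_on_imp_continuous_on by (intro continuous_intros) auto
  have cG: "continuous_on S G"
    unfolding G_def using cg U(2) by (intro continuous_intros) (auto intro: continuous_on_subset)
  have dpos: "0 \<le> d" "d \<le> pi" by (auto simp: d_def field_simps)
  have th: "\<theta> j = 2 * real j * d" for j by (simp add: \<theta>_def d_def field_simps)
  have pi: "pi = (2*real n+1)*d + d"
  proof -
    have "(2*real n+1)*d + d = (2*(real n + 1)) * d" by (simp add: algebra_simps)
    also have "\<dots> = pi" unfolding d_def by (simp add: add.commute)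
    finally show ?thesis by simp
  qed
  define M1 where "M1 = Sup ((\<lambda>z. norm (g z)) ` closed_segment (\<i> * of_real (cos d)) \<i>)"
  define M2 where "M2 = Sup ((\<lambda>z. norm (g z)) ` closed_segment (-\<i>) (-\<i> * of_real (cos d)))"
  define Mc where "Mc = (\<lambda>j. Sup ((\<lambda>z. norm (wave_E g t z)) `
                     closed_segment (\<i> * of_real (cos (\<theta> j - d))) (\<i> * of_real (cos (\<theta> j + d)))))"
  have T1: "closed_segment (\<i> * of_real (cos d)) \<i> \<subseteq> U"
    using U(2) inS[of d] unfolding S_def by (metis ends_in_segment(2) subset_closed_segment subset_trans)
  have T2: "closed_segment (-\<i>) (-\<i> * of_real (cos d)) \<subseteq> U"
  proof -
    have "-\<i> * of_real (cos d) = \<i> * of_real (cos (pi - d))" by simp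
    then show ?thesis using U(2) inS[of "pi - d"] unfolding S_def
      by (metis ends_in_segment(1) subset_closed_segment subset_trans)
  qed
  have normG: "norm (G (\<i> * of_real c)) = norm (g (\<i> * of_real c))" for c
    by (simp add: G_def norm_mult)
  have normphi: "norm (\<phi> x) = (sin x)^2 * norm (g (\<i> * of_real (cos x)))" for x
    by (simp add: \<phi>_def norm_mult normG norm_power)
  have M1pos: "0 \<le> M1"
    using sup_bound[OF continuous_on_subset[OF cg T1] compact_segment, of \<i>] unfolding M1_def
    by (meson ends_in_segment(2) norm_ge_zero order_trans)
  have M2pos: "0 \<le> M2"
    using sup_bound[OF continuous_on_subset[OF cg T2] compact_segment, of "-\<i>"] unfolding M2_def
    by (meson ends_in_segment(1) norm_ge_zero order_trans)
  have eL: "norm (\<phi> x) \<le> M1 * x^2" if x: "x \<in> {0..pi/(2*real(n+1))}" for x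
  proof -
    have x0: "0 \<le> x" "x \<le> d" using x by (auto simp: d_def)
    have s0: "0 \<le> sin x" using x0 dpos by (intro sin_ge_zero) auto
    have "sin x \<le> x" by (rule sin_x_le_x[OF x0(1)])
    then have s2: "(sin x)^2 \<le> x^2" using s0 by (intro power_mono) auto
    have "cos d \<le> cos x" using x0 dpos by (intro cos_monotone_0_pi_le) auto
    then have "\<i> * of_real (cos x) \<in> closed_segment (\<i> * of_real (cos d)) (\<i> * of_real 1)"
      by (intro seg_imag) auto
    then have "norm (g (\<i> * of_real (cos x))) \<le> M1"
      unfolding M1_def using sup_bound[OF continuous_on_subset[OF cg T1] compact_segment] by simp
    then have "(sin x)^2 * norm (g (\<i> * of_real (cos x))) \<le> x^2 * M1"
      by (intro mult_mono s2) auto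
    then show ?thesis by (simp add: normphi mult.commute)
  qed
  have eR: "norm (\<phi> x) \<le> M2 * (pi - x)^2" if x: "x \<in> {pi - pi/(2*real(n+1))..pi}" for x
  proof -
    have x0: "pi - d \<le> x" "x \<le> pi" using x by (auto simp: d_def)
    have s0: "0 \<le> sin x" using x0 dpos by (intro sin_ge_zero) auto
    have "sin x = sin (pi - x)" by simp
    also have "\<dots> \<le> pi - x" using x0 by (intro sin_x_le_x) auto
    finally have s2: "(sin x)^2 \<le> (pi - x)^2" using s0 by (intro power_mono) auto
    have "cos x \<le> cos (pi - d)" using x0 dpos by (intro cos_monotone_0_pi_le) auto
    then have "\<i> * of_real (cos x) \<in> closed_segment (\<i> * of_real (-1)) (\<i> * of_real (- cos d))"
      by (intro seg_imag) auto
    then have "\<i> * of_real (cos x) \<in> closed_segment (-\<i>) (-\<i> * of_real (cos d))" by simp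
    then have "norm (g (\<i> * of_real (cos x))) \<le> M2"
      unfolding M2_def using sup_bound[OF continuous_on_subset[OF cg T2] compact_segment] by simp
    then have "(sin x)^2 * norm (g (\<i> * of_real (cos x))) \<le> (pi - x)^2 * M2"
      by (intro mult_mono s2) auto
    then show ?thesis by (simp add: normphi mult.commute)
  qed
  have cell: "norm (\<phi>2 x) \<le> Mc j"
    if j: "j \<in> {1..n}" and x: "x \<in> {real j*pi/real(n+1) - pi/(2*real(n+1)) .. real j*pi/real(n+1) + pi/(2*real(n+1))}" for j x
  proof -
    have x0: "\<theta> j - d \<le> x" "x \<le> \<theta> j + d" using x by (auto simp: \<theta>_def d_def)
    have lo: "0 \<le> \<theta> j - d"
    proof -
      have j1: "1 \<le> real j" using j by simp
      have "d \<le> real j * d" using mult_right_mono[OF j1 dpos(1)] by simp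
      moreover have "\<theta> j - d = 2*(real j*d) - d" by (simp add: th)
      ultimately show ?thesis using dpos by linarith
    qed
    have hi: "\<theta> j + d \<le> pi"
    proof -
      have "real j \<le> real n" using j by simp
      then have "real j * d \<le> real n * d" using dpos by (intro mult_right_mono) auto
      moreover have "\<theta> j + d = 2*(real j*d) + d" by (simp add: th)
      moreover have "pi = 2*(real n*d) + d + d" using pi by (simp add: algebra_simps)
      ultimately show ?thesis using dpos by linarith
    qed
    have c1: "cos x \<le> cos (\<theta> j - d)" using x0 lo hi by (intro cos_monotone_0_pi_le) auto
    have c2: "cos (\<theta> j + d) \<le> cos x" using x0 lo hi by (intro cos_monotone_0_pi_le) auto
    have T: "closed_segment (\<i> * of_real (cos (\<theta> j - d))) (\<i> * of_real (cos (\<theta> j + d))) \<subseteq> U"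
      using U(2) inS unfolding S_def by (meson subset_closed_segment subset_trans)
    have "\<i> * of_real (cos x) \<in> closed_segment (\<i> * of_real (cos (\<theta> j - d))) (\<i> * of_real (cos (\<theta> j + d)))"
      using c1 c2 by (intro seg_imag) auto
    then show ?thesis
      unfolding Mc_def \<phi>2_def norm_minus_cancel using sup_bound[OF continuous_on_subset[OF cE T] compact_segment] by simp
  qed
  have core: "norm (integral {0..pi} \<phi> - (\<Sum>j=1..n. (2*d) *\<^sub>R \<phi> (\<theta> j)))
          \<le> d^3/3 * (M1 + M2 + (\<Sum>j=1..n. Mc j))"
    using core_bound[OF D1 D2 eL eR cell] unfolding \<theta>_def d_def by simp
  have ci: "contour_integral (linepath (-\<i>) \<i>) (\<lambda>z. csqrt (1 + z^2) * exp (z * of_real t) * g z)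
      = \<i> * integral {0..pi} \<phi>"
  proof -
    have "(\<lambda>z. csqrt (1 + z^2) * exp (z * of_real t) * g z) = (\<lambda>z. csqrt (1 + z^2) * G z)"
      by (simp add: G_def mult.assoc)
    then show ?thesis using contour_to_theta[OF cG[unfolded S_def]] by (simp add: \<phi>_def)
  qed
  have sm: "of_real pi * (\<Sum>j=1..n. g (zz j) * exp (zz j * of_real t) * of_real (\<alpha> j))
      = (\<Sum>j=1..n. (2*d) *\<^sub>R \<phi> (\<theta> j))"
    unfolding sum_distrib_left
  proof (rule sum.cong[OF refl])
    fix j
    have "2 * d = pi / real (n+1)" by (simp add: d_def field_simps)
    then show "of_real pi * (g (zz j) * exp (zz j * of_real t) * of_real (\<alpha> j)) = (2*d) *\<^sub>R \<phi> (\<theta> j)"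
      by (simp add: zz_def \<alpha>_def \<phi>_def G_def scaleR_conv_of_real)
  qed
  define Q where "Q = (\<Sum>j=1..n. (2*d) *\<^sub>R \<phi> (\<theta> j))"
  have K0: "0 \<le> K" by (simp add: K_def)
  have lhs: "norm (2 * of_real K * contour_integral (linepath (-\<i>) \<i>)
                     (\<lambda>z. csqrt (1 + z^2) * exp (z * of_real t) * g z)
                  - 2 * of_real pi * \<i> * of_real K *
                     (\<Sum>j=1..n. g (zz j) * exp (zz j * of_real t) * of_real (\<alpha> j)))
         = 2 * K * norm (integral {0..pi} \<phi> - Q)"
  proof -
    have "2 * of_real K * contour_integral (linepath (-\<i>) \<i>)
                     (\<lambda>z. csqrt (1 + z^2) * exp (z * of_real t) * g z)
                  - 2 * of_real pi * \<i> * of_real K *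
                     (\<Sum>j=1..n. g (zz j) * exp (zz j * of_real t) * of_real (\<alpha> j))
        = (2 * of_real K * \<i>) * (integral {0..pi} \<phi> - Q)"
      unfolding ci Q_def sm[symmetric] by (simp add: algebra_simps)
    then show ?thesis using K0 by (simp add: norm_mult)
  qed
  have main: "norm (2 * of_real K * contour_integral (linepath (-\<i>) \<i>)
                     (\<lambda>z. csqrt (1 + z^2) * exp (z * of_real t) * g z)
                  - 2 * of_real pi * \<i> * of_real K *
                     (\<Sum>j=1..n. g (zz j) * exp (zz j * of_real t) * of_real (\<alpha> j)))
            \<le> 2/3 * K * d^3 * (3 * M1 + 3 * M2 + (\<Sum>j=1..n. Mc j))"
  proof -
    have "2 * K * norm (integral {0..pi} \<phi> - Q) \<le> 2 * K * (d^3/3 * (M1 + M2 + (\<Sum>j=1..n. Mc j)))"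
      using core K0 unfolding Q_def by (intro mult_left_mono) auto
    also have "\<dots> \<le> 2/3 * K * d^3 * (3 * M1 + 3 * M2 + (\<Sum>j=1..n. Mc j))"
    proof -
      have "0 \<le> 2/3 * K * d^3 * (2 * M1 + 2 * M2)"
        using K0 dpos M1pos M2pos by (intro mult_nonneg_nonneg) auto
      moreover have "2/3 * K * d^3 * (3 * M1 + 3 * M2 + (\<Sum>j=1..n. Mc j))
          = 2 * K * (d^3/3 * (M1 + M2 + (\<Sum>j=1..n. Mc j))) + 2/3 * K * d^3 * (2 * M1 + 2 * M2)"
        by (simp add: field_simps)
      ultimately show ?thesis by linarith
    qed
    finally show ?thesis unfolding lhs .
  qed
  show ?thesis
    using main unfolding Let_def \<theta>_def zz_def \<alpha>_def d_def K_def M1_def M2_def Mc_def .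
qed


end
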